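(* Let $\Omega$ be an infinite compact Hausdorff space and let $\Gamma$ be a group acting on $\Omega$ by homeomorphisms, and let $n\ge 2$ be an integer. The induced action $\alpha$ of $\Gamma$ on $C(\Omega)$, $\alpha_g(f)(\omega)=f(g^{-1}\omega)$, is $n$-filling if and only if for any nonempty open subsets $U_1,\dots,U_n$ of $\Omega$ there exist $g_1,\dots,g_n\in\Gamma$ such that $g_1U_1\cup\dots\cup g_nU_n=\Omega$.
   Context: An action $\alpha$ of a group $\Gamma$ on a unital $C^*$-algebra $A$ is called $n$-filling if for all $b_1,\dots,b_n\in A^+$ with $\|b_j\|=1$ ($1\le j\le n$) and all $\epsilon>0$ there exist $g_1,\dots,g_n\in\Gamma$ such that $\sum_{j=1}^n\alpha_{g_j}(b_j)\ge 1-\epsilon$. *)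

theory Defs
  imports "HOL-Analysis.Analysis" "HOL-Algebra.Group_Action"
begin

definition cfun :: "('a::topological_space \<Rightarrow> complex) \<Rightarrow> bool" where
  "cfun f \<longleftrightarrow> continuous_on UNIV f"

definition cpos :: "('a \<Rightarrow> complex) \<Rightarrow> bool" where
  "cpos f \<longleftrightarrow> (\<forall>x. Im (f x) = 0 \<and> 0 \<le> Re (f x))"

definition supnorm :: "('a \<Rightarrow> complex) \<Rightarrow> real" where
  "supnorm f = (SUP x. norm (f x))"

definition induced_action ::
  "('g, 'b) monoid_scheme \<Rightarrow> ('g \<Rightarrow> 'a \<Rightarrow> 'a) \<Rightarrow> 'g \<Rightarrow> ('a \<Rightarrow> complex) \<Rightarrow> ('a \<Rightarrow> complex)" where
  "induced_action G \<phi> g f = (\<lambda>w. f (\<phi> (inv\<^bsub>G\<^esub> g) w))"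

text \<open>n-filling action on C(Omega) (indices 0..n-1); b >= c means b - c is positive,
  where 1 is the constant function 1.\<close>
definition n_filling ::
  "('g, 'b) monoid_scheme \<Rightarrow> ('g \<Rightarrow> 'a::topological_space \<Rightarrow> 'a) \<Rightarrow> nat \<Rightarrow> bool" where
  "n_filling G \<phi> n \<longleftrightarrow>
    (\<forall>b :: nat \<Rightarrow> 'a \<Rightarrow> complex.
      (\<forall>j<n. cfun (b j) \<and> cpos (b j) \<and> supnorm (b j) = 1) \<longrightarrow>
      (\<forall>\<epsilon>::real. \<epsilon> > 0 \<longrightarrow>
        (\<exists>gs :: nat \<Rightarrow> 'g. (\<forall>j<n. gs j \<in> carrier G) \<and>
           cpos (\<lambda>w. (\<Sum>j<n. induced_action G \<phi> (gs j) (b j) w) - complex_of_real (1 - \<epsilon>)))))"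

end

theory Submission
  imports Defs
begin

lemma haus_t2: "Hausdorff_space (euclidean :: 'a::t2_space topology)"
  unfolding Hausdorff_space_def disjnt_def
proof (simp, intro allI impI)
  fix x y :: 'a assume "x \<noteq> y"
  from hausdorff[OF this] obtain U V where "open U" "open V" "x \<in> U" "y \<in> V" "U \<inter> V = {}"
    by metis
  then show "\<exists>U. open U \<and> (\<exists>V. open V \<and> x \<in> U \<and> y \<in> V \<and> U \<inter> V = {})" by metis
qed

lemma bump_exists:
  fixes U :: "'a::t2_space set"
  assumes cpt: "compact (UNIV :: 'a set)" and "open U" "U \<noteq> {}"
  shows "\<exists>f::'a\<Rightarrow>real. continuous_on UNIV f \<and> (\<forall>x. 0 \<le> f x \<and> f x \<le> 1)
           \<and> (\<exists>x. f x = 1) \<and> (\<forall>x. x \<notin> U \<longrightarrow> f x = 0)"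
proof -
  obtain x where x: "x \<in> U" using assms by blast
  have "compact_space (euclidean :: 'a topology)"
    using cpt by (simp add: compact_space_def)
  then have ns: "normal_space (euclidean :: 'a topology)"
    by (rule compact_Hausdorff_or_regular_imp_normal_space[OF _ disjI1[OF haus_t2]])
  have c1: "closedin euclidean (- U)" using assms by (simp add: closed_Compl)
  have c2: "closedin euclidean {x}" by auto
  have d: "disjnt (- U) {x}" using x by (auto simp: disjnt_def)
  obtain f where f: "continuous_map euclidean (top_of_set {0..1::real}) f"
      "f ` (- U) \<subseteq> {0}" "f ` {x} \<subseteq> {1}"
    using Urysohn_lemma[OF ns c1 c2 d, of 0 1] by auto
  have "continuous_on UNIV f \<and> f \<in> UNIV \<rightarrow> {0..1}"
    using f(1) continuous_map_subtopology_eu[of UNIV "{0..1::real}" f] by simp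
  then show ?thesis using f(2,3) by (intro exI[of _ f]) auto
qed

lemma act_inv:
  assumes "group_action G UNIV \<phi>" "g \<in> carrier G"
  shows "\<phi> g (\<phi> (inv\<^bsub>G\<^esub> g) w) = w"
proof -
  obtain x where "\<phi> g x = w"
    using group_action.bij_prop1[OF assms(1) assms(2), of w] by auto
  moreover then have "\<phi> (inv\<^bsub>G\<^esub> g) w = x"
    using group_action.orbit_sym_aux[OF assms(1) assms(2)] by auto
  ultimately show ?thesis by simp
qed

theorem proposition0p3:
  fixes G :: "('g, 'b) monoid_scheme" and \<phi> :: "'g \<Rightarrow> 'a::t2_space \<Rightarrow> 'a" and n :: nat
  assumes "compact (UNIV :: 'a set)"
    and "infinite (UNIV :: 'a set)"
    and "group_action G UNIV \<phi>"
    and "\<forall>g\<in>carrier G. continuous_on UNIV (\<phi> g)"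
    and "n \<ge> 2"
  shows "n_filling G \<phi> n \<longleftrightarrow>
    (\<forall>U :: nat \<Rightarrow> 'a set. (\<forall>j<n. open (U j) \<and> U j \<noteq> {}) \<longrightarrow>
       (\<exists>gs :: nat \<Rightarrow> 'g. (\<forall>j<n. gs j \<in> carrier G) \<and> (\<Union>j<n. \<phi> (gs j) ` U j) = UNIV))"
proof
  assume nf: "n_filling G \<phi> n"
  show "\<forall>U :: nat \<Rightarrow> 'a set. (\<forall>j<n. open (U j) \<and> U j \<noteq> {}) \<longrightarrow>
       (\<exists>gs :: nat \<Rightarrow> 'g. (\<forall>j<n. gs j \<in> carrier G) \<and> (\<Union>j<n. \<phi> (gs j) ` U j) = UNIV)"
  proof (intro allI impI)
    fix U :: "nat \<Rightarrow> 'a set"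
    assume U: "\<forall>j<n. open (U j) \<and> U j \<noteq> {}"
    have "\<exists>f::'a\<Rightarrow>real. j < n \<longrightarrow> (continuous_on UNIV f \<and> (\<forall>x. 0 \<le> f x \<and> f x \<le> 1)
           \<and> (\<exists>x. f x = 1) \<and> (\<forall>x. x \<notin> U j \<longrightarrow> f x = 0))" for j
    proof (cases "j < n")
      case True
      then have "open (U j)" "U j \<noteq> {}" using U by auto
      from bump_exists[OF assms(1) this] show ?thesis by (elim exE) (rule exI, rule impI)
    qed auto
    then have "\<forall>j. \<exists>f::'a\<Rightarrow>real. j < n \<longrightarrow> (continuous_on UNIV f \<and> (\<forall>x. 0 \<le> f x \<and> f x \<le> 1)
           \<and> (\<exists>x. f x = 1) \<and> (\<forall>x. x \<notin> U j \<longrightarrow> f x = 0))" by (rule allI)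
    from choice[OF this] obtain f :: "nat \<Rightarrow> 'a \<Rightarrow> real" where f0: "\<forall>j. j < n \<longrightarrow> (continuous_on UNIV (f j) \<and> (\<forall>x. 0 \<le> f j x \<and> f j x \<le> 1)
           \<and> (\<exists>x. f j x = 1) \<and> (\<forall>x. x \<notin> U j \<longrightarrow> f j x = 0))"
      by (rule exE)
    note f = f0[rule_format]
    define b where "b = (\<lambda>j x. complex_of_real (f j x))"
    have hbj: "cfun (b j) \<and> cpos (b j) \<and> supnorm (b j) = 1" if j: "j < n" for j
    proof -
      have fc: "continuous_on UNIV (f j)" and fb: "\<And>x. 0 \<le> f j x \<and> f j x \<le> 1"
        and fx: "\<exists>x. f j x = 1" and fz: "\<And>x. x \<notin> U j \<Longrightarrow> f j x = 0"
        using f[OF j] by auto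
      have c1: "cfun (b j)" unfolding cfun_def b_def
        using fc by (intro continuous_on_of_real)
      have c2: "cpos (b j)" unfolding cpos_def b_def using fb by simp
      obtain x0 where x0: "f j x0 = 1" using fx by (elim exE)
      have nb: "norm (b j x) = f j x" for x
        unfolding b_def using fb[of x] by simp
      have "Sup (range (\<lambda>x. norm (b j x))) = 1"
      proof (rule cSup_eq_maximum)
        show "1 \<in> range (\<lambda>x. norm (b j x))" unfolding nb using x0[symmetric] by (rule range_eqI)
        show "y \<le> 1" if "y \<in> range (\<lambda>x. norm (b j x))" for y
          using that fb unfolding nb by force
      qed
      then have c3: "supnorm (b j) = 1" unfolding supnorm_def by simp
      show ?thesis using c1 c2 c3 by (intro conjI)
    qed
    have hb: "\<forall>j<n. cfun (b j) \<and> cpos (b j) \<and> supnorm (b j) = 1"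
      using hbj by (intro allI impI)
    have half: "(1/2::real) > 0" by simp
    obtain gs where gs: "\<forall>j<n. gs j \<in> carrier G"
      "cpos (\<lambda>w. (\<Sum>j<n. induced_action G \<phi> (gs j) (b j) w) - complex_of_real (1 - 1/2))"
      using nf[unfolded n_filling_def, THEN spec[where x=b], THEN mp, OF hb, THEN spec[where x="1/2"], THEN mp, OF half] by blast
    have wcov: "w \<in> (\<Union>j<n. \<phi> (gs j) ` U j)" for w :: 'a
    proof -
      have "0 \<le> Re ((\<Sum>j<n. b j (\<phi> (inv\<^bsub>G\<^esub> gs j) w)) - complex_of_real (1 - 1/2))"
        using gs(2) unfolding cpos_def induced_action_def by blast
      then have "(\<Sum>j<n. b j (\<phi> (inv\<^bsub>G\<^esub> gs j) w)) \<noteq> 0"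
      proof (rule contrapos_pn)
        assume z: "(\<Sum>j<n. b j (\<phi> (inv\<^bsub>G\<^esub> gs j) w)) = 0"
        show "\<not> 0 \<le> Re ((\<Sum>j<n. b j (\<phi> (inv\<^bsub>G\<^esub> gs j) w)) - complex_of_real (1 - 1/2))"
          unfolding z by simp
      qed
      then have "\<exists>j<n. b j (\<phi> (inv\<^bsub>G\<^esub> gs j) w) \<noteq> 0"
      proof (rule contrapos_np)
        assume "\<not> (\<exists>j<n. b j (\<phi> (inv\<^bsub>G\<^esub> gs j) w) \<noteq> 0)"
        then have "\<forall>j\<in>{..<n}. b j (\<phi> (inv\<^bsub>G\<^esub> gs j) w) = 0" by auto
        then show "(\<Sum>j<n. b j (\<phi> (inv\<^bsub>G\<^esub> gs j) w)) = 0" by (rule sum.neutral)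
      qed
      then obtain j where j: "j < n" "b j (\<phi> (inv\<^bsub>G\<^esub> gs j) w) \<noteq> 0" by blast
      then have "\<phi> (inv\<^bsub>G\<^esub> gs j) w \<in> U j" using f[OF j(1)] unfolding b_def by auto
      then have "\<phi> (gs j) (\<phi> (inv\<^bsub>G\<^esub> gs j) w) \<in> \<phi> (gs j) ` U j" by blast
      then show "w \<in> (\<Union>j<n. \<phi> (gs j) ` U j)"
        using act_inv[OF assms(3)] gs(1) j(1) by auto
    qed
    then have "(\<Union>j<n. \<phi> (gs j) ` U j) = UNIV" by blast
    then show "\<exists>gs :: nat \<Rightarrow> 'g. (\<forall>j<n. gs j \<in> carrier G) \<and> (\<Union>j<n. \<phi> (gs j) ` U j) = UNIV"
      using gs(1) by blast
  qed
next
  assume cov: "\<forall>U :: nat \<Rightarrow> 'a set. (\<forall>j<n. open (U j) \<and> U j \<noteq> {}) \<longrightarrow>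
       (\<exists>gs :: nat \<Rightarrow> 'g. (\<forall>j<n. gs j \<in> carrier G) \<and> (\<Union>j<n. \<phi> (gs j) ` U j) = UNIV)"
  show "n_filling G \<phi> n" unfolding n_filling_def
  proof (intro allI impI)
    fix b :: "nat \<Rightarrow> 'a \<Rightarrow> complex" and \<epsilon> :: real
    assume hb: "\<forall>j<n. cfun (b j) \<and> cpos (b j) \<and> supnorm (b j) = 1" and e: "\<epsilon> > 0"
    define U where "U = (\<lambda>j. {x. 1 - \<epsilon> < Re (b j x)})"
    have "\<forall>j<n. open (U j) \<and> U j \<noteq> {}"
    proof (intro allI impI conjI)
      fix j assume j: "j < n"
      have "continuous_on UNIV (\<lambda>x. Re (b j x))"
        using hb j unfolding cfun_def by (intro continuous_intros) auto
      then show "open (U j)" unfolding U_def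
        using open_Collect_less[of "\<lambda>_. 1 - \<epsilon>" "\<lambda>x. Re (b j x)"] by auto
      show "U j \<noteq> {}"
      proof
        assume "U j = {}"
        then have le: "\<And>x. norm (b j x) \<le> 1 - \<epsilon>"
          using hb j unfolding U_def cpos_def by (auto simp: cmod_eq_Re not_less)
        have "supnorm (b j) \<le> 1 - \<epsilon>" unfolding supnorm_def
          by (rule cSUP_least) (use le in auto)
        then show False using hb j e by simp
      qed
    qed
    then obtain gs where gs: "\<forall>j<n. gs j \<in> carrier G" "(\<Union>j<n. \<phi> (gs j) ` U j) = UNIV"
      using cov by blast
    have "cpos (\<lambda>w. (\<Sum>j<n. induced_action G \<phi> (gs j) (b j) w) - complex_of_real (1 - \<epsilon>))"
      unfolding cpos_def induced_action_def
    proof (intro allI conjI)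
      fix w
      have "Im (\<Sum>j<n. b j (\<phi> (inv\<^bsub>G\<^esub> gs j) w)) = 0"
        using hb unfolding cpos_def by (simp add: Im_sum)
      then show "Im ((\<Sum>j<n. b j (\<phi> (inv\<^bsub>G\<^esub> gs j) w)) - complex_of_real (1 - \<epsilon>)) = 0" by simp
      obtain j where j: "j < n" "w \<in> \<phi> (gs j) ` U j" using gs(2) by blast
      then obtain u where u: "u \<in> U j" "w = \<phi> (gs j) u" by blast
      have "\<phi> (inv\<^bsub>G\<^esub> gs j) w = u"
        using group_action.orbit_sym_aux[OF assms(3)] gs(1) j(1) u(2) by auto
      then have "1 - \<epsilon> < Re (b j (\<phi> (inv\<^bsub>G\<^esub> gs j) w))" using u(1) unfolding U_def by simp
      also have "\<dots> \<le> (\<Sum>i<n. Re (b i (\<phi> (inv\<^bsub>G\<^esub> gs i) w)))"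
        using hb j(1) unfolding cpos_def
        by (intro member_le_sum[where f="\<lambda>i. Re (b i (\<phi> (inv\<^bsub>G\<^esub> gs i) w))"]) auto
      finally show "0 \<le> Re ((\<Sum>j<n. b j (\<phi> (inv\<^bsub>G\<^esub> gs j) w)) - complex_of_real (1 - \<epsilon>))"
        by (simp add: Re_sum)
    qed
    then show "\<exists>gs :: nat \<Rightarrow> 'g. (\<forall>j<n. gs j \<in> carrier G) \<and>
           cpos (\<lambda>w. (\<Sum>j<n. induced_action G \<phi> (gs j) (b j) w) - complex_of_real (1 - \<epsilon>))"
      using gs(1) by blast
  qed
qed

end
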